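(* Consider a multi-prover interactive proof system with entangled provers in which the verifier treats the provers $P_1,\dots,P_k$ symmetrically, i.e. the protocol is invariant under permuting the provers' questions and correspondingly inverse-permuting their answers. Then for any entangled strategy of $P_1,\dots,P_k$ with shared state $|\Psi\rangle$ that is accepted with probability $p$, there is an entangled strategy $P_1',\dots,P_k'$ with shared state $|\Psi'\rangle$, accepted with probability $p$, such that $P_1'=\cdots=P_k'$ and $|\Psi'\rangle$ is invariant under any permutation of the provers' subsystems.
   Context: An entangled strategy for $k$ provers consists of a finite-dimensional state $|\Psi\rangle$ shared among the provers (one register per prover) together with, for each prover and each round, a quantum operation acting on the received classical message and the prover's register, after which the outgoing message is obtained by a computational-basis measurement. Provers cannot communicate. *)

theory Defs
  imports "HOL-Probability.Probability_Mass_Function" "HOL-Library.FuncSet"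
begin

text \<open>
  Provers are indexed by a finite type 'p (so k = CARD('p)); questions and
  answers are finite types 'q and 'a.
  Prover i holds a register C^(d i); the joint space is the tensor product, whose
  computational basis is indexed by functions j :: 'p => nat with j i < d i.
  A local operator on C^n is a matrix given by its entries M row col.
\<close>

type_synonym ('p,'q,'a) transcript = "(('p \<Rightarrow> 'q) \<times> ('p \<Rightarrow> 'a)) list"
type_synonym mat = "nat \<Rightarrow> nat \<Rightarrow> complex"

record ('p,'q,'a) verifier =
  rounds :: nat
  next_q :: "('p,'q,'a) transcript \<Rightarrow> ('p \<Rightarrow> 'q) pmf"
  acc    :: "('p,'q,'a) transcript \<Rightarrow> real"

text \<open>Entangled strategy: register dimensions, shared state, and for each prover,
  round and received question an instrument whose outcome is the answer
  (a quantum operation followed by a computational-basis measurement of the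
  outgoing message), given by lists of Kraus operators per answer.\<close>
record ('p,'q,'a) strategy =
  dims  :: "'p \<Rightarrow> nat"
  state :: "('p \<Rightarrow> nat) \<Rightarrow> complex"
  ops   :: "'p \<Rightarrow> nat \<Rightarrow> 'q \<Rightarrow> 'a \<Rightarrow> mat list"

definition idx :: "('p \<Rightarrow> nat) \<Rightarrow> ('p \<Rightarrow> nat) set" where
  "idx d = (\<Pi>\<^sub>E i\<in>UNIV. {..<d i})"

definition norm2 :: "('p::finite \<Rightarrow> nat) \<Rightarrow> (('p \<Rightarrow> nat) \<Rightarrow> complex) \<Rightarrow> real" where
  "norm2 d \<psi> = (\<Sum>j\<in>idx d. (cmod (\<psi> j))\<^sup>2)"

definition apply_local ::
  "('p::finite \<Rightarrow> nat) \<Rightarrow> ('p \<Rightarrow> mat) \<Rightarrow> (('p \<Rightarrow> nat) \<Rightarrow> complex) \<Rightarrow> (('p \<Rightarrow> nat) \<Rightarrow> complex)" where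
  "apply_local d M \<psi> = (\<lambda>j. if j \<in> idx d
      then (\<Sum>j'\<in>idx d. (\<Prod>i\<in>UNIV. M i (j i) (j' i)) * \<psi> j') else 0)"

text \<open>Interaction: n rounds remaining, transcript t so far (its length is the
  current round index), current unnormalised joint state psi.\<close>
primrec run :: "('p::finite,'q::finite,'a::finite) verifier \<Rightarrow> ('p,'q,'a) strategy \<Rightarrow> nat
      \<Rightarrow> ('p,'q,'a) transcript \<Rightarrow> (('p \<Rightarrow> nat) \<Rightarrow> complex) \<Rightarrow> real" where
  "run V S 0 t \<psi> = acc V t * norm2 (dims S) \<psi>"
| "run V S (Suc n) t \<psi> =
     (\<Sum>q\<in>UNIV. pmf (next_q V t) q *
       (\<Sum>a\<in>UNIV. \<Sum>c\<in>(\<Pi>\<^sub>E i\<in>UNIV. {..<length (ops S i (length t) (q i) (a i))}).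
          run V S n (t @ [(q, a)])
            (apply_local (dims S) (\<lambda>i. ops S i (length t) (q i) (a i) ! c i) \<psi>)))"

definition accept_prob :: "('p::finite,'q::finite,'a::finite) verifier \<Rightarrow> ('p,'q,'a) strategy \<Rightarrow> real" where
  "accept_prob V S = run V S (rounds V) [] (state S)"

definition valid_verifier :: "('p,'q,'a) verifier \<Rightarrow> bool" where
  "valid_verifier V \<longleftrightarrow> (\<forall>t. 0 \<le> acc V t \<and> acc V t \<le> 1)"

text \<open>Valid strategy: positive finite dimensions, unit state vector, and every
  instrument is trace preserving: sum over answers and Kraus operators of K^* K = I.\<close>
definition valid_strategy :: "('p::finite,'q::finite,'a::finite) verifier \<Rightarrow> ('p,'q,'a) strategy \<Rightarrow> bool" where
  "valid_strategy V S \<longleftrightarrow>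
     (\<forall>i. 0 < dims S i) \<and>
     (\<forall>j. j \<notin> idx (dims S) \<longrightarrow> state S j = 0) \<and>
     norm2 (dims S) (state S) = 1 \<and>
     (\<forall>i r q. r < rounds V \<longrightarrow>
        (\<forall>j<dims S i. \<forall>j'<dims S i.
           (\<Sum>a\<in>UNIV. sum_list (map (\<lambda>K. \<Sum>l<dims S i. cnj (K l j) * K l j') (ops S i r q a)))
             = (if j = j' then 1 else 0)))"

definition perm_transcript :: "('p \<Rightarrow> 'p) \<Rightarrow> ('p,'q,'a) transcript \<Rightarrow> ('p,'q,'a) transcript" where
  "perm_transcript \<sigma> t = map (\<lambda>(q, a). (q \<circ> \<sigma>, a \<circ> \<sigma>)) t"

definition symmetric_verifier :: "('p,'q,'a) verifier \<Rightarrow> bool" where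
  "symmetric_verifier V \<longleftrightarrow> (\<forall>\<sigma> t. bij \<sigma> \<longrightarrow>
     next_q V (perm_transcript \<sigma> t) = map_pmf (\<lambda>q. q \<circ> \<sigma>) (next_q V t) \<and>
     acc V (perm_transcript \<sigma> t) = acc V t)"

end

theory Submission imports Defs "HOL-Combinatorics.Permutations" begin

lemma idx_iff: "j \<in> idx d \<longleftrightarrow> (\<forall>i. j i < d i)"
  by (auto simp: idx_def PiE_iff)

lemma finite_idx[simp]: "finite (idx (d::'p::finite \<Rightarrow> nat))"
  unfolding idx_def by (intro finite_PiE) auto

lemma apply_local_zero: "apply_local d M (\<lambda>_. 0) = (\<lambda>_. 0)"
  by (auto simp: apply_local_def intro!: ext)

lemma norm2_zero: "norm2 d (\<lambda>_. 0) = 0"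
  by (simp add: norm2_def)

lemma run_zero: "run V S n t (\<lambda>_. 0) = 0"
  by (induction n arbitrary: t) (simp_all add: norm2_zero apply_local_zero)

lemma apply_local_zero_mat:
  assumes "\<And>x y. M i x y = 0"
  shows "apply_local d M \<psi> = (\<lambda>_. 0)"
proof -
  have h: "\<And>j j'. (\<Prod>i\<in>UNIV. M i (j i) (j' i)) = 0"
    using assms by (intro prod_zero) auto
  show ?thesis unfolding apply_local_def h by (rule ext) simp
qed

lemma apply_local_sum:
  assumes "finite P"
  shows "apply_local d M (\<lambda>J. \<Sum>l\<in>P. v l J) = (\<lambda>J. \<Sum>l\<in>P. apply_local d M (v l) J)"
  using assms by (auto simp: apply_local_def sum_distrib_left intro!: ext sum.swap)

lemma apply_local_scale:
  "apply_local d M (\<lambda>J. c * v J) = (\<lambda>J. c * apply_local d M v J)"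
  by (auto simp: apply_local_def sum_distrib_left intro!: ext sum.cong)

lemma norm2_scale: "norm2 d (\<lambda>J. c * v J) = (cmod c)^2 * norm2 d v"
  by (simp add: norm2_def norm_mult power_mult_distrib sum_distrib_left)

lemma run_scale: "run V S n t (\<lambda>j. c * \<psi> j) = (cmod c)^2 * run V S n t \<psi>"
proof (induction n arbitrary: t \<psi>)
  case 0 then show ?case by (simp add: norm2_scale)
next
  case (Suc n)
  show ?case by (simp add: apply_local_scale Suc sum_distrib_left mult.left_commute)
qed

lemma sum_single:
  assumes "finite P" "\<And>l. l \<in> P \<Longrightarrow> l \<noteq> l0 \<Longrightarrow> h l = 0"
  shows "sum h P = (if l0 \<in> P then h l0 else 0)"
proof (cases "l0 \<in> P")
  case True
  then show ?thesis using assms by (simp add: sum.remove)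
next
  case False
  have "sum h P = 0" using assms False by (intro sum.neutral) auto
  then show ?thesis using False by simp
qed

lemma sum_comp_PiE:
  fixes \<mu> :: "'i \<Rightarrow> 'i" and A :: "'i \<Rightarrow> 'b set"
  assumes "bij \<mu>"
  shows "(\<Sum>c\<in>PiE UNIV A. h (c \<circ> \<mu>)) = (\<Sum>c\<in>PiE UNIV (\<lambda>m. A (\<mu> m)). h c)"
proof (rule sum.reindex_bij_witness[where j="\<lambda>c. c \<circ> \<mu>" and i="\<lambda>c. c \<circ> inv \<mu>"])
  have s1: "\<mu> \<circ> inv \<mu> = id" using bij_is_surj[OF assms] surj_iff by blast
  have s2: "inv \<mu> \<circ> \<mu> = id" using bij_is_inj[OF assms] inj_iff by blast
  have s3: "\<And>x. \<mu> (inv \<mu> x) = x" using s1 by (metis comp_apply id_apply)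
  fix c :: "'i \<Rightarrow> 'b"
  show "c \<circ> \<mu> \<circ> inv \<mu> = c" using s1 by (simp add: o_assoc[symmetric])
  show "c \<circ> inv \<mu> \<circ> \<mu> = c" using s2 by (simp add: o_assoc[symmetric])
  show "c \<in> PiE UNIV A \<Longrightarrow> c \<circ> \<mu> \<in> PiE UNIV (\<lambda>m. A (\<mu> m))" by (auto simp: PiE_iff)
  show "c \<in> PiE UNIV (\<lambda>m. A (\<mu> m)) \<Longrightarrow> c \<circ> inv \<mu> \<in> PiE UNIV A"
    by (auto simp: PiE_iff) (metis s3)
  show "h (c \<circ> \<mu>) = h (c \<circ> \<mu>)" ..
qed

lemma sum_comp_UNIV:
  fixes \<mu> :: "'i \<Rightarrow> 'i"
  assumes "bij \<mu>"
  shows "(\<Sum>x\<in>UNIV. h (x \<circ> \<mu>)) = (\<Sum>x\<in>UNIV. h x)"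
proof (rule sum.reindex_bij_witness[where j="\<lambda>c. c \<circ> \<mu>" and i="\<lambda>c. c \<circ> inv \<mu>"])
  have s1: "\<mu> \<circ> inv \<mu> = id" using bij_is_surj[OF assms] surj_iff by blast
  have s2: "inv \<mu> \<circ> \<mu> = id" using bij_is_inj[OF assms] inj_iff by blast
  note s = s1 s2
  fix c
  show "c \<circ> \<mu> \<circ> inv \<mu> = c" using s by (simp add: o_assoc[symmetric])
  show "c \<circ> inv \<mu> \<circ> \<mu> = c" using s by (simp add: o_assoc[symmetric])
qed auto

locale symc =
  fixes V :: "('p::finite,'q::finite,'a::finite) verifier" and S :: "('p,'q,'a) strategy"
    and f :: "'p \<Rightarrow> nat"
  assumes f_bij: "bij_betw f UNIV {..<CARD('p)}"
    and dims_pos: "\<And>i. 0 < dims S i"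
begin

definition g where "g = inv_into UNIV f"
definition D where "D = (\<Sum>m\<in>UNIV. dims S m)"
definition N where "N = CARD('p) * D"
definition valid :: "nat \<Rightarrow> bool" where
  "valid y \<longleftrightarrow> y div D < CARD('p) \<and> y mod D < dims S (g (y div D))"
definition kr :: "'p \<Rightarrow> nat \<Rightarrow> 'q \<Rightarrow> 'a \<Rightarrow> nat \<Rightarrow> mat" where
  "kr m r q a c = (if c < length (ops S m r q a) then ops S m r q a ! c else (\<lambda>_ _. 0))"
definition bigK :: "nat \<Rightarrow> 'q \<Rightarrow> 'a \<Rightarrow> nat \<Rightarrow> mat" where
  "bigK r q a c y y' = (if valid y \<and> valid y' then
      (if y div D = y' div D then kr (g (y div D)) r q a c (y mod D) (y' mod D) else 0)
    else if y = y' \<and> a = undefined \<and> c = 0 then 1 else 0)"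
definition L where "L r q a = max 1 (Max ((\<lambda>m. length (ops S m r q a)) ` UNIV))"
definition inSec :: "('p \<Rightarrow> 'p) \<Rightarrow> ('p \<Rightarrow> nat) \<Rightarrow> bool" where
  "inSec l J \<longleftrightarrow> (\<forall>i. J i div D = f (l i) \<and> J i mod D < dims S (l i))"
definition lift :: "('p \<Rightarrow> 'p) \<Rightarrow> (('p \<Rightarrow> nat) \<Rightarrow> complex) \<Rightarrow> (('p \<Rightarrow> nat) \<Rightarrow> complex)" where
  "lift l \<psi> J = (if inSec l J then \<psi> (\<lambda>m. J (inv l m) mod D) else 0)"
definition P :: "('p \<Rightarrow> 'p) set" where "P = {l. l permutes UNIV}"

lemma finite_P[simp]: "finite P"
  unfolding P_def by (rule finite_permutations) simp

lemma g_f[simp]: "g (f m) = m"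
  using f_bij unfolding g_def by (simp add: bij_betw_def)

lemma f_lt[simp]: "f m < CARD('p)"
  using f_bij by (auto simp: bij_betw_def)

lemma f_g[simp]: "n < CARD('p) \<Longrightarrow> f (g n) = n"
  using f_bij unfolding g_def by (simp add: bij_betw_def f_inv_into_f)

lemma dims_le_D: "dims S m \<le> D"
  unfolding D_def by (rule member_le_sum) auto

lemma D_pos: "0 < D"
  using dims_le_D[of undefined] dims_pos[of undefined] by linarith

lemma N_pos: "0 < N"
  unfolding N_def using D_pos by simp

lemma valid_lt: "valid y \<Longrightarrow> y < N"
proof -
  assume "valid y"
  then have "y div D < CARD('p)" by (simp add: valid_def)
  then have "y div D + 1 \<le> CARD('p)" by simp
  then have "(y div D + 1) * D \<le> CARD('p) * D" by (rule mult_right_mono) simp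
  moreover have "y < (y div D + 1) * D" using D_pos
    by (metis dividend_less_div_times mult.commute add.commute distrib_left mult_1_right)
  ultimately show ?thesis unfolding N_def by linarith
qed

lemma P_bij: "l \<in> P \<Longrightarrow> bij l"
  unfolding P_def by (simp add: permutes_bij)

lemma P_inv: "l \<in> P \<Longrightarrow> inv l \<in> P"
  unfolding P_def by (simp add: permutes_inv)

lemma P_inv_l[simp]: "l \<in> P \<Longrightarrow> inv l (l i) = i"
  unfolding P_def by (simp add: permutes_inverses(2))

lemma P_l_inv[simp]: "l \<in> P \<Longrightarrow> l (inv l i) = i"
  unfolding P_def by (simp add: permutes_inverses(1))

lemma inSec_div: "inSec l J \<Longrightarrow> J i div D = f (l i)"
  by (simp add: inSec_def)

lemma inSec_mod: "inSec l J \<Longrightarrow> J i mod D < dims S (l i)"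
  by (simp add: inSec_def)

lemma inSec_valid: "inSec l J \<Longrightarrow> valid (J i)"
  by (simp add: inSec_def valid_def)

lemma inSec_g: "inSec l J \<Longrightarrow> g (J i div D) = l i"
  by (simp add: inSec_def)

lemma inSec_idx: "inSec l J \<Longrightarrow> J \<in> idx (\<lambda>_. N)"
  using inSec_valid valid_lt by (auto simp: idx_iff)

lemma inSec_unique: "inSec l J \<Longrightarrow> inSec l' J \<Longrightarrow> l = l'"
  using inSec_g by (metis ext)

lemma enc_div: "x < dims S m \<Longrightarrow> (b * D + x) div D = b"
  using dims_le_D[of m] D_pos by simp

lemma enc_mod: "x < dims S m \<Longrightarrow> (b * D + x) mod D = x"
  using dims_le_D[of m] D_pos by simp

lemma mod_small: "x < dims S m \<Longrightarrow> x mod D = x"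
  by (meson dims_le_D less_le_trans mod_less)

lemma inSec_enc: "j \<in> idx (dims S) \<Longrightarrow> l \<in> P \<Longrightarrow> inSec l (\<lambda>i. f (l i) * D + j (l i))"
  unfolding inSec_def
proof (intro allI)
  fix i assume "j \<in> idx (dims S)"
  then have h: "j (l i) < dims S (l i)" by (simp add: idx_iff)
  show "(f (l i) * D + j (l i)) div D = f (l i) \<and> (f (l i) * D + j (l i)) mod D < dims S (l i)"
    using enc_div[OF h] enc_mod[OF h] h by simp
qed

lemma inSec_dec: "inSec l J \<Longrightarrow> l \<in> P \<Longrightarrow> (\<lambda>m. J (inv l m) mod D) \<in> idx (dims S)"
  unfolding idx_iff by (metis P_l_inv inSec_mod)

lemma inSec_J: "inSec l J \<Longrightarrow> J i = f (l i) * D + J i mod D"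
  by (metis inSec_div div_mult_mod_eq)

lemma sum_sec:
  assumes l: "l \<in> P" and z: "\<And>J. J \<in> idx (\<lambda>_. N) \<Longrightarrow> \<not> inSec l J \<Longrightarrow> F J = 0"
  shows "(\<Sum>J\<in>idx (\<lambda>_. N). F J) = (\<Sum>j\<in>idx (dims S). F (\<lambda>i. f (l i) * D + j (l i)))"
proof -
  have "(\<Sum>J\<in>idx (\<lambda>_. N). F J) = (\<Sum>J\<in>{J. inSec l J}. F J)"
    using z inSec_idx by (intro sum.mono_neutral_right) auto
  also have "\<dots> = (\<Sum>j\<in>idx (dims S). F (\<lambda>i. f (l i) * D + j (l i)))"
  proof (rule sum.reindex_bij_witness[where i="\<lambda>j i. f (l i) * D + j (l i)" and j="\<lambda>J m. J (inv l m) mod D"])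
    fix J assume "J \<in> {J. inSec l J}"
    then have J: "inSec l J" by simp
    show "(\<lambda>i. f (l i) * D + J (inv l (l i)) mod D) = J"
      using l inSec_J[OF J] by (auto intro!: ext)
    show "(\<lambda>m. J (inv l m) mod D) \<in> idx (dims S)" using inSec_dec J l by blast
    show "F (\<lambda>i. f (l i) * D + J (inv l (l i)) mod D) = F J"
      using l inSec_J[OF J] by (auto intro!: arg_cong[where f=F] ext)
  next
    fix j assume j: "j \<in> idx (dims S)"
    then show "(\<lambda>m. (f (l (inv l m)) * D + j (l (inv l m))) mod D) = j"
      using l enc_mod by (auto simp: idx_iff intro!: ext)
    show "(\<lambda>i. f (l i) * D + j (l i)) \<in> {J. inSec l J}" using inSec_enc j l by simp
  qed
  finally show ?thesis .
qed

lemma lift_enc: "l \<in> P \<Longrightarrow> j \<in> idx (dims S) \<Longrightarrow> lift l \<psi> (\<lambda>i. f (l i) * D + j (l i)) = \<psi> j"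
  unfolding lift_def using inSec_enc[of j l] enc_mod
  by (auto simp: idx_iff intro!: arg_cong[where f=\<psi>] ext)

lemma norm2_lift: "l \<in> P \<Longrightarrow> norm2 (\<lambda>_. N) (lift l \<psi>) = norm2 (dims S) \<psi>"
proof -
  assume l: "l \<in> P"
  have "norm2 (\<lambda>_. N) (lift l \<psi>) = (\<Sum>j\<in>idx (dims S). (cmod (lift l \<psi> (\<lambda>i. f (l i) * D + j (l i))))\<^sup>2)"
    unfolding norm2_def by (rule sum_sec[OF l]) (simp add: lift_def)
  also have "\<dots> = norm2 (dims S) \<psi>"
    unfolding norm2_def using l by (intro sum.cong) (auto simp: lift_enc)
  finally show ?thesis .
qed

lemma sum_lift_single:
  "(\<Sum>l\<in>P. h l (lift l (\<psi> l) J)) = (if (\<lambda>i. g (J i div D)) \<in> P then h (\<lambda>i. g (J i div D)) (lift (\<lambda>i. g (J i div D)) (\<psi> (\<lambda>i. g (J i div D))) J) else 0)"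
  if "\<And>l. h l 0 = 0"
proof (rule sum_single)
  fix l assume "l \<in> P" "l \<noteq> (\<lambda>i. g (J i div D))"
  then have "\<not> inSec l J" using inSec_g by (metis ext)
  then show "h l (lift l (\<psi> l) J) = 0" by (simp add: lift_def that)
qed simp

lemma norm2_sum_lift:
  "norm2 (\<lambda>_. N) (\<lambda>J. \<Sum>l\<in>P. lift l (\<psi> l) J) = (\<Sum>l\<in>P. norm2 (dims S) (\<psi> l))"
proof -
  have "norm2 (\<lambda>_. N) (\<lambda>J. \<Sum>l\<in>P. lift l (\<psi> l) J) = (\<Sum>J\<in>idx (\<lambda>_. N). \<Sum>l\<in>P. (cmod (lift l (\<psi> l) J))\<^sup>2)"
    unfolding norm2_def
    using sum_lift_single[where h="\<lambda>l x. x"] sum_lift_single[where h="\<lambda>l x. (cmod x)^2"]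
    by (intro sum.cong) auto
  also have "\<dots> = (\<Sum>l\<in>P. norm2 (\<lambda>_. N) (lift l (\<psi> l)))"
    unfolding norm2_def by (rule sum.swap)
  also have "\<dots> = (\<Sum>l\<in>P. norm2 (dims S) (\<psi> l))"
    by (intro sum.cong) (auto simp: norm2_lift)
  finally show ?thesis .
qed

lemma bigK_sec: "inSec l J \<Longrightarrow> inSec l J' \<Longrightarrow>
   bigK r qq aa cc (J i) (J' i) = kr (l i) r qq aa cc (J i mod D) (J' i mod D)"
  by (simp add: bigK_def inSec_valid inSec_div inSec_g)

lemma bigK_nsec:
  assumes "\<not> inSec l J" "inSec l J'"
  shows "\<exists>i. bigK r (q i) (a i) (c i) (J i) (J' i) = 0"
proof -
  obtain i where i: "J i div D \<noteq> f (l i) \<or> \<not> J i mod D < dims S (l i)"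
    using assms(1) unfolding inSec_def by blast
  have v: "valid (J' i)" "J' i div D = f (l i)" using assms(2) inSec_valid inSec_div by auto
  have "bigK r (q i) (a i) (c i) (J i) (J' i) = 0"
  proof (cases "valid (J i)")
    case True
    then have "J i div D \<noteq> J' i div D" using i v unfolding valid_def by auto
    then show ?thesis using True v by (simp add: bigK_def)
  next
    case False
    then have "J i \<noteq> J' i" using v by auto
    then show ?thesis using False by (simp add: bigK_def)
  qed
  then show ?thesis by blast
qed

lemma apply_lift:
  assumes l: "l \<in> P"
  shows "apply_local (\<lambda>_. N) (\<lambda>i. bigK r (q i) (a i) (c i)) (lift l \<psi>) =
    lift l (apply_local (dims S) (\<lambda>m. kr m r (q (inv l m)) (a (inv l m)) (c (inv l m))) \<psi>)"
proof (rule ext)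
  fix J
  show "apply_local (\<lambda>_. N) (\<lambda>i. bigK r (q i) (a i) (c i)) (lift l \<psi>) J =
    lift l (apply_local (dims S) (\<lambda>m. kr m r (q (inv l m)) (a (inv l m)) (c (inv l m))) \<psi>) J"
  proof (cases "inSec l J")
    case True
    have JN: "J \<in> idx (\<lambda>_. N)" using inSec_idx[OF True] .
    have Jd: "(\<lambda>m. J (inv l m) mod D) \<in> idx (dims S)" using inSec_dec[OF True l] .
    have "apply_local (\<lambda>_. N) (\<lambda>i. bigK r (q i) (a i) (c i)) (lift l \<psi>) J =
       (\<Sum>J'\<in>idx (\<lambda>_. N). (\<Prod>i\<in>UNIV. bigK r (q i) (a i) (c i) (J i) (J' i)) * lift l \<psi> J')"
      using JN by (simp add: apply_local_def)
    also have "\<dots> = (\<Sum>j\<in>idx (dims S). (\<Prod>i\<in>UNIV. bigK r (q i) (a i) (c i) (J i) (f (l i) * D + j (l i))) * lift l \<psi> (\<lambda>i. f (l i) * D + j (l i)))"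
      by (rule sum_sec[OF l]) (simp add: lift_def)
    also have "\<dots> = (\<Sum>j\<in>idx (dims S). (\<Prod>m\<in>UNIV. kr m r (q (inv l m)) (a (inv l m)) (c (inv l m)) (J (inv l m) mod D) (j m)) * \<psi> j)"
    proof (rule sum.cong[OF refl])
      fix j assume j: "j \<in> idx (dims S)"
      have sec: "inSec l (\<lambda>i. f (l i) * D + j (l i))" using inSec_enc[OF j l] .
      have "(\<Prod>i\<in>UNIV. bigK r (q i) (a i) (c i) (J i) (f (l i) * D + j (l i)))
          = (\<Prod>i\<in>UNIV. kr (l i) r (q i) (a i) (c i) (J i mod D) (j (l i)))"
      proof (rule prod.cong[OF refl])
        fix i
        have "j (l i) < dims S (l i)" using j by (simp add: idx_iff)
        then show "bigK r (q i) (a i) (c i) (J i) (f (l i) * D + j (l i)) = kr (l i) r (q i) (a i) (c i) (J i mod D) (j (l i))"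
          using bigK_sec[OF True sec, of r "q i" "a i" "c i" i] enc_mod by simp
      qed
      also have "\<dots> = (\<Prod>m\<in>UNIV. kr m r (q (inv l m)) (a (inv l m)) (c (inv l m)) (J (inv l m) mod D) (j m))"
        using prod.reindex_bij_betw[OF P_bij[OF l, unfolded bij_def[symmetric]],
            of "\<lambda>m. kr m r (q (inv l m)) (a (inv l m)) (c (inv l m)) (J (inv l m) mod D) (j m)"] l
        by simp
      finally show "(\<Prod>i\<in>UNIV. bigK r (q i) (a i) (c i) (J i) (f (l i) * D + j (l i))) * lift l \<psi> (\<lambda>i. f (l i) * D + j (l i)) = (\<Prod>m\<in>UNIV. kr m r (q (inv l m)) (a (inv l m)) (c (inv l m)) (J (inv l m) mod D) (j m)) * \<psi> j"
        using lift_enc[OF l j] by simp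
    qed
    also have "\<dots> = lift l (apply_local (dims S) (\<lambda>m. kr m r (q (inv l m)) (a (inv l m)) (c (inv l m))) \<psi>) J"
      using True Jd by (simp add: lift_def apply_local_def)
    finally show ?thesis .
  next
    case False
    have "apply_local (\<lambda>_. N) (\<lambda>i. bigK r (q i) (a i) (c i)) (lift l \<psi>) J = 0"
      unfolding apply_local_def
    proof (simp, intro impI sum.neutral ballI)
      fix J' 
      show "(\<Prod>i\<in>UNIV. bigK r (q i) (a i) (c i) (J i) (J' i)) * lift l \<psi> J' = 0"
      proof (cases "inSec l J'")
        case True
        obtain i where "bigK r (q i) (a i) (c i) (J i) (J' i) = 0"
          using bigK_nsec[OF False True] by blast
        then have "(\<Prod>i\<in>UNIV. bigK r (q i) (a i) (c i) (J i) (J' i)) = 0"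
          by (intro prod_zero) auto
        then show ?thesis by simp
      qed (simp add: lift_def)
    qed
    then show ?thesis using False by (simp add: lift_def)
  qed
qed

definition cst :: complex where "cst = complex_of_real (1 / sqrt (fact CARD('p)))"
definition Psi' where "Psi' = (\<lambda>J. \<Sum>l\<in>P. lift l (\<lambda>j. cst * state S j) J)"
definition S' :: "('p,'q,'a) strategy" where
  "S' = \<lparr>dims = (\<lambda>_. N), state = Psi', ops = (\<lambda>i r q a. map (bigK r q a) [0..<L r q a])\<rparr>"

lemma len_le_L: "length (ops S m r q a) \<le> L r q a"
proof -
  have "length (ops S m r q a) \<le> Max ((\<lambda>m. length (ops S m r q a)) ` UNIV)" by (rule Max_ge) auto
  then show ?thesis unfolding L_def by linarith
qed

lemma L_pos: "0 < L r q a"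
  unfolding L_def by simp

lemma trunc:
  "(\<Sum>c\<in>PiE UNIV (\<lambda>m. {..<L r (q m) (a m)}). run V S n t (apply_local (dims S) (\<lambda>m. kr m r (q m) (a m) (c m)) \<psi>))
   = (\<Sum>c\<in>PiE UNIV (\<lambda>m. {..<length (ops S m r (q m) (a m))}). run V S n t (apply_local (dims S) (\<lambda>m. ops S m r (q m) (a m) ! c m) \<psi>))"
proof -
  have "(\<Sum>c\<in>PiE UNIV (\<lambda>m. {..<L r (q m) (a m)}). run V S n t (apply_local (dims S) (\<lambda>m. kr m r (q m) (a m) (c m)) \<psi>))
   = (\<Sum>c\<in>PiE UNIV (\<lambda>m. {..<length (ops S m r (q m) (a m))}). run V S n t (apply_local (dims S) (\<lambda>m. kr m r (q m) (a m) (c m)) \<psi>))"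
  proof (rule sum.mono_neutral_right)
    show "finite (PiE UNIV (\<lambda>m. {..<L r (q m) (a m)}))" by (intro finite_PiE) auto
    show "PiE UNIV (\<lambda>m. {..<length (ops S m r (q m) (a m))}) \<subseteq> PiE UNIV (\<lambda>m. {..<L r (q m) (a m)})"
      using len_le_L by (auto simp: PiE_iff) (meson less_le_trans)
    show "\<forall>c\<in>PiE UNIV (\<lambda>m. {..<L r (q m) (a m)}) - PiE UNIV (\<lambda>m. {..<length (ops S m r (q m) (a m))}). run V S n t (apply_local (dims S) (\<lambda>m. kr m r (q m) (a m) (c m)) \<psi>) = 0"
    proof
    fix c assume "c \<in> PiE UNIV (\<lambda>m. {..<L r (q m) (a m)}) - PiE UNIV (\<lambda>m. {..<length (ops S m r (q m) (a m))})"
    then obtain m where "\<not> c m < length (ops S m r (q m) (a m))" by (auto simp: PiE_iff)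
    then have "apply_local (dims S) (\<lambda>m. kr m r (q m) (a m) (c m)) \<psi> = (\<lambda>_. 0)"
      by (intro apply_local_zero_mat[where i=m]) (simp add: kr_def)
    then show "run V S n t (apply_local (dims S) (\<lambda>m. kr m r (q m) (a m) (c m)) \<psi>) = 0"
      by (simp add: run_zero)
    qed
  qed
  also have "\<dots> = (\<Sum>c\<in>PiE UNIV (\<lambda>m. {..<length (ops S m r (q m) (a m))}). run V S n t (apply_local (dims S) (\<lambda>m. ops S m r (q m) (a m) ! c m) \<psi>))"
  proof (rule sum.cong[OF refl])
    fix c assume "c \<in> PiE UNIV (\<lambda>m. {..<length (ops S m r (q m) (a m))})"
    then have "(\<lambda>m. kr m r (q m) (a m) (c m)) = (\<lambda>m. ops S m r (q m) (a m) ! c m)"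
      by (auto simp: kr_def PiE_iff)
    then show "run V S n t (apply_local (dims S) (\<lambda>m. kr m r (q m) (a m) (c m)) \<psi>) = run V S n t (apply_local (dims S) (\<lambda>m. ops S m r (q m) (a m) ! c m) \<psi>)"
      by simp
  qed
  finally show ?thesis .
qed

lemma perm_app: "perm_transcript \<mu> (t @ [(q, a)]) = perm_transcript \<mu> t @ [(q \<circ> \<mu>, a \<circ> \<mu>)]"
  by (simp add: perm_transcript_def)

lemma perm_len[simp]: "length (perm_transcript \<mu> t) = length t"
  by (simp add: perm_transcript_def)

lemma per_l:
  assumes sym: "symmetric_verifier V" and l: "l \<in> P"
  shows "(\<Sum>q\<in>UNIV. pmf (next_q V t) q * (\<Sum>a\<in>UNIV. \<Sum>c\<in>PiE UNIV (\<lambda>i. {..<L r (q i) (a i)}). G (q \<circ> inv l) (a \<circ> inv l) (c \<circ> inv l)))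
   = (\<Sum>q\<in>UNIV. pmf (next_q V (perm_transcript (inv l) t)) q * (\<Sum>a\<in>UNIV. \<Sum>c\<in>PiE UNIV (\<lambda>i. {..<L r (q i) (a i)}). G q a c))"
proof -
  define \<mu> where "\<mu> = inv l"
  have b: "bij \<mu>" unfolding \<mu>_def using P_bij P_inv l by blast
  define H where "H q a = (\<Sum>c\<in>PiE UNIV (\<lambda>i. {..<L r (q i) (a i)}). G q a c)" for q a
  have c: "(\<Sum>c\<in>PiE UNIV (\<lambda>i. {..<L r (q i) (a i)}). G (q \<circ> \<mu>) (a \<circ> \<mu>) (c \<circ> \<mu>)) = H (q \<circ> \<mu>) (a \<circ> \<mu>)" for q a
    unfolding H_def using sum_comp_PiE[OF b, where A="\<lambda>i. {..<L r (q i) (a i)}" and h="G (q \<circ> \<mu>) (a \<circ> \<mu>)"]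
    by (simp add: comp_def)
  have a: "(\<Sum>a\<in>UNIV. H (q \<circ> \<mu>) (a \<circ> \<mu>)) = (\<Sum>a\<in>UNIV. H (q \<circ> \<mu>) a)" for q
    using sum_comp_UNIV[OF b, of "H (q \<circ> \<mu>)"] .
  have injc: "inj (\<lambda>q::'p \<Rightarrow> 'q. q \<circ> \<mu>)"
  proof (rule injI)
    fix x y :: "'p \<Rightarrow> 'q" assume "x \<circ> \<mu> = y \<circ> \<mu>"
    then have "x \<circ> \<mu> \<circ> inv \<mu> = y \<circ> \<mu> \<circ> inv \<mu>" by simp
    moreover have "\<mu> \<circ> inv \<mu> = id" using bij_is_surj[OF b] surj_iff by blast
    ultimately show "x = y" by (simp add: o_assoc[symmetric])
  qed
  have p: "pmf (next_q V t) q = pmf (next_q V (perm_transcript \<mu> t)) (q \<circ> \<mu>)" for q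
    using sym b unfolding symmetric_verifier_def by (simp add: pmf_map_inj'[OF injc])
  have "(\<Sum>q\<in>UNIV. pmf (next_q V t) q * (\<Sum>a\<in>UNIV. \<Sum>c\<in>PiE UNIV (\<lambda>i. {..<L r (q i) (a i)}). G (q \<circ> \<mu>) (a \<circ> \<mu>) (c \<circ> \<mu>)))
      = (\<Sum>q\<in>UNIV. pmf (next_q V (perm_transcript \<mu> t)) (q \<circ> \<mu>) * (\<Sum>a\<in>UNIV. H (q \<circ> \<mu>) a))"
    by (simp add: c a p)
  also have "\<dots> = (\<Sum>q\<in>UNIV. pmf (next_q V (perm_transcript \<mu> t)) q * (\<Sum>a\<in>UNIV. H q a))"
    using sum_comp_UNIV[OF b, of "\<lambda>q. pmf (next_q V (perm_transcript \<mu> t)) q * (\<Sum>a\<in>UNIV. H q a)"] .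
  finally show ?thesis unfolding H_def \<mu>_def .
qed

lemma acc_perm: "symmetric_verifier V \<Longrightarrow> l \<in> P \<Longrightarrow> acc V (perm_transcript (inv l) t) = acc V t"
  unfolding symmetric_verifier_def using P_bij P_inv by blast

lemma run_main:
  assumes sym: "symmetric_verifier V"
  shows "run V S' n t (\<lambda>J. \<Sum>l\<in>P. lift l (\<psi> l) J) = (\<Sum>l\<in>P. run V S n (perm_transcript (inv l) t) (\<psi> l))"
proof (induction n arbitrary: t \<psi>)
  case 0
  have "run V S' 0 t (\<lambda>J. \<Sum>l\<in>P. lift l (\<psi> l) J) = (\<Sum>l\<in>P. acc V t * norm2 (dims S) (\<psi> l))"
    by (simp add: S'_def norm2_sum_lift sum_distrib_left)
  also have "\<dots> = (\<Sum>l\<in>P. run V S 0 (perm_transcript (inv l) t) (\<psi> l))"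
    using acc_perm[OF sym] by (intro sum.cong) auto
  finally show ?case .
next
  case (Suc n)
  define r where "r = length t"
  define F where "F l q a c = run V S n (perm_transcript (inv l) t @ [(q \<circ> inv l, a \<circ> inv l)])
     (apply_local (dims S) (\<lambda>m. kr m r ((q \<circ> inv l) m) ((a \<circ> inv l) m) ((c \<circ> inv l) m)) (\<psi> l))"
    for l q a c
  have inner: "(\<Sum>c\<in>PiE UNIV (\<lambda>i. {..<length (ops S' i r (q i) (a i))}).
        run V S' n (t @ [(q, a)]) (apply_local (dims S') (\<lambda>i. ops S' i r (q i) (a i) ! c i) (\<lambda>J. \<Sum>l\<in>P. lift l (\<psi> l) J)))
    = (\<Sum>c\<in>PiE UNIV (\<lambda>i. {..<L r (q i) (a i)}). \<Sum>l\<in>P. F l q a c)" for q a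
  proof (rule sum.cong)
    show "PiE UNIV (\<lambda>i. {..<length (ops S' i r (q i) (a i))}) = PiE UNIV (\<lambda>i. {..<L r (q i) (a i)})"
      by (simp add: S'_def)
    fix c assume c: "c \<in> PiE UNIV (\<lambda>i. {..<L r (q i) (a i)})"
    have e: "(\<lambda>i. ops S' i r (q i) (a i) ! c i) = (\<lambda>i. bigK r (q i) (a i) (c i))"
      using c by (auto simp: S'_def PiE_iff)
    have e2: "apply_local (\<lambda>_. N) (\<lambda>i. bigK r (q i) (a i) (c i)) (\<lambda>J. \<Sum>l\<in>P. lift l (\<psi> l) J)
       = (\<lambda>J. \<Sum>l\<in>P. lift l (apply_local (dims S) (\<lambda>m. kr m r (q (inv l m)) (a (inv l m)) (c (inv l m))) (\<psi> l)) J)"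
      unfolding apply_local_sum[OF finite_P]
      by (intro ext sum.cong refl) (simp add: apply_lift)
    have "run V S' n (t @ [(q, a)]) (apply_local (dims S') (\<lambda>i. ops S' i r (q i) (a i) ! c i) (\<lambda>J. \<Sum>l\<in>P. lift l (\<psi> l) J))
        = run V S' n (t @ [(q, a)]) (\<lambda>J. \<Sum>l\<in>P. lift l (apply_local (dims S) (\<lambda>m. kr m r (q (inv l m)) (a (inv l m)) (c (inv l m))) (\<psi> l)) J)"
      unfolding e by (simp add: e2 S'_def)
    also have "\<dots> = (\<Sum>l\<in>P. run V S n (perm_transcript (inv l) (t @ [(q, a)])) (apply_local (dims S) (\<lambda>m. kr m r (q (inv l m)) (a (inv l m)) (c (inv l m))) (\<psi> l)))"
      by (rule Suc.IH)
    also have "\<dots> = (\<Sum>l\<in>P. F l q a c)"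
      by (simp add: F_def perm_app comp_def)
    finally show "run V S' n (t @ [(q, a)]) (apply_local (dims S') (\<lambda>i. ops S' i r (q i) (a i) ! c i) (\<lambda>J. \<Sum>l\<in>P. lift l (\<psi> l) J)) = (\<Sum>l\<in>P. F l q a c)" .
  qed
  have "run V S' (Suc n) t (\<lambda>J. \<Sum>l\<in>P. lift l (\<psi> l) J)
     = (\<Sum>q\<in>UNIV. pmf (next_q V t) q * (\<Sum>a\<in>UNIV. \<Sum>c\<in>PiE UNIV (\<lambda>i. {..<L r (q i) (a i)}). \<Sum>l\<in>P. F l q a c))"
    using inner by (simp add: r_def)
  also have "\<dots> = (\<Sum>q\<in>UNIV. \<Sum>l\<in>P. pmf (next_q V t) q * (\<Sum>a\<in>UNIV. \<Sum>c\<in>PiE UNIV (\<lambda>i. {..<L r (q i) (a i)}). F l q a c))"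
  proof (rule sum.cong[OF refl])
    fix q
    have "(\<Sum>a\<in>UNIV. \<Sum>c\<in>PiE UNIV (\<lambda>i. {..<L r (q i) (a i)}). \<Sum>l\<in>P. F l q a c)
        = (\<Sum>a\<in>UNIV. \<Sum>l\<in>P. \<Sum>c\<in>PiE UNIV (\<lambda>i. {..<L r (q i) (a i)}). F l q a c)"
      by (rule sum.cong[OF refl], rule sum.swap)
    also have "\<dots> = (\<Sum>l\<in>P. \<Sum>a\<in>UNIV. \<Sum>c\<in>PiE UNIV (\<lambda>i. {..<L r (q i) (a i)}). F l q a c)"
      by (rule sum.swap)
    finally show "pmf (next_q V t) q * (\<Sum>a\<in>UNIV. \<Sum>c\<in>PiE UNIV (\<lambda>i. {..<L r (q i) (a i)}). \<Sum>l\<in>P. F l q a c) =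
        (\<Sum>l\<in>P. pmf (next_q V t) q * (\<Sum>a\<in>UNIV. \<Sum>c\<in>PiE UNIV (\<lambda>i. {..<L r (q i) (a i)}). F l q a c))"
      by (simp add: sum_distrib_left)
  qed
  also have "\<dots> = (\<Sum>l\<in>P. \<Sum>q\<in>UNIV. pmf (next_q V t) q * (\<Sum>a\<in>UNIV. \<Sum>c\<in>PiE UNIV (\<lambda>i. {..<L r (q i) (a i)}). F l q a c))"
    by (rule sum.swap)
  also have "\<dots> = (\<Sum>l\<in>P. run V S (Suc n) (perm_transcript (inv l) t) (\<psi> l))"
  proof (rule sum.cong[OF refl])
    fix l assume l: "l \<in> P"
    define G where "G q a c = run V S n (perm_transcript (inv l) t @ [(q, a)])
     (apply_local (dims S) (\<lambda>m. kr m r (q m) (a m) (c m)) (\<psi> l))" for q a c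
    have "(\<Sum>q\<in>UNIV. pmf (next_q V t) q * (\<Sum>a\<in>UNIV. \<Sum>c\<in>PiE UNIV (\<lambda>i. {..<L r (q i) (a i)}). F l q a c))
       = (\<Sum>q\<in>UNIV. pmf (next_q V t) q * (\<Sum>a\<in>UNIV. \<Sum>c\<in>PiE UNIV (\<lambda>i. {..<L r (q i) (a i)}). G (q \<circ> inv l) (a \<circ> inv l) (c \<circ> inv l)))"
      by (simp add: F_def G_def)
    also have "\<dots> = (\<Sum>q\<in>UNIV. pmf (next_q V (perm_transcript (inv l) t)) q * (\<Sum>a\<in>UNIV. \<Sum>c\<in>PiE UNIV (\<lambda>i. {..<L r (q i) (a i)}). G q a c))"
      by (rule per_l[OF sym l])
    also have "\<dots> = run V S (Suc n) (perm_transcript (inv l) t) (\<psi> l)"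
      by (simp add: G_def trunc r_def)
    finally show "(\<Sum>q\<in>UNIV. pmf (next_q V t) q * (\<Sum>a\<in>UNIV. \<Sum>c\<in>PiE UNIV (\<lambda>i. {..<L r (q i) (a i)}). F l q a c)) = run V S (Suc n) (perm_transcript (inv l) t) (\<psi> l)" .
  qed
  finally show ?case .
qed

lemma sl_upt: "sum_list (map h (map gg [0..<n])) = (\<Sum>c<n. h (gg c))"
  by (simp add: interv_sum_list_conv_sum_set_nat atLeast0LessThan)

lemma sl_nth: "sum_list (map h xs) = (\<Sum>c<length xs. h (xs ! c))"
  by (subst sum_list_sum_nth) (auto simp: atLeast0LessThan intro!: sum.cong)

lemma bigK_inv: "\<not> valid y \<Longrightarrow> bigK r q a c l y = (if l = y \<and> a = undefined \<and> c = 0 then 1 else 0)"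
  by (auto simp: bigK_def)

lemma bigK_valid: "valid y \<Longrightarrow> bigK r q a c l y = (if valid l \<and> l div D = y div D then kr (g (y div D)) r q a c (l mod D) (y mod D) else 0)"
  by (auto simp: bigK_def)

lemma blocksum:
  assumes v: "valid y" and z: "\<And>l. l < N \<Longrightarrow> \<not> (valid l \<and> l div D = y div D) \<Longrightarrow> F l = 0"
  shows "(\<Sum>l<N. F l) = (\<Sum>x<dims S (g (y div D)). F (y div D * D + x))"
proof -
  let ?b = "y div D" and ?m = "g (y div D)"
  have "(\<Sum>l<N. F l) = (\<Sum>l\<in>(\<lambda>x. ?b * D + x) ` {..<dims S ?m}. F l)"
  proof (rule sum.mono_neutral_right)
    show "finite {..<N}" by simp
    show "(\<lambda>x. ?b * D + x) ` {..<dims S ?m} \<subseteq> {..<N}"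
    proof
      fix l assume "l \<in> (\<lambda>x. ?b * D + x) ` {..<dims S ?m}"
      then obtain x where x: "x < dims S ?m" "l = ?b * D + x" by auto
      have "valid l" using x v enc_div[OF x(1)] enc_mod[OF x(1)] by (simp add: valid_def)
      then show "l \<in> {..<N}" using valid_lt by simp
    qed
    show "\<forall>l\<in>{..<N} - (\<lambda>x. ?b * D + x) ` {..<dims S ?m}. F l = 0"
    proof
      fix l assume l: "l \<in> {..<N} - (\<lambda>x. ?b * D + x) ` {..<dims S ?m}"
      show "F l = 0"
      proof (rule z)
        show "l < N" using l by simp
        show "\<not> (valid l \<and> l div D = y div D)"
        proof
          assume h: "valid l \<and> l div D = y div D"
          then have "l mod D < dims S ?m" unfolding valid_def by metis
          moreover have "l = ?b * D + l mod D" using h by (metis div_mult_mod_eq)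
          ultimately show False using l by auto
        qed
      qed
    qed
  qed
  also have "\<dots> = (\<Sum>x<dims S ?m. F (?b * D + x))"
    by (subst sum.reindex) (auto simp: inj_on_def)
  finally show ?thesis .
qed

lemma tp:
  assumes orig: "\<And>j j'. j < dims S (g (y div D)) \<Longrightarrow> j' < dims S (g (y div D)) \<Longrightarrow>
      (\<Sum>a\<in>UNIV. sum_list (map (\<lambda>K. \<Sum>l<dims S (g (y div D)). cnj (K l j) * K l j') (ops S (g (y div D)) r q a))) = (if j = j' then 1 else 0)"
    and y: "y < N" and y': "y' < N"
  shows "(\<Sum>a\<in>UNIV. sum_list (map (\<lambda>K. \<Sum>l<N. cnj (K l y) * K l y') (map (bigK r q a) [0..<L r q a])))
     = (if y = y' then 1 else 0)"
proof -
  have "(\<Sum>a\<in>UNIV. sum_list (map (\<lambda>K. \<Sum>l<N. cnj (K l y) * K l y') (map (bigK r q a) [0..<L r q a])))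
    = (\<Sum>a\<in>UNIV. \<Sum>c<L r q a. \<Sum>l<N. cnj (bigK r q a c l y) * bigK r q a c l y')"
    by (rule sum.cong[OF refl], rule sl_upt)
  also have "\<dots> = (if y = y' then 1 else 0)"
  proof (cases "valid y")
    case False
    have "(\<Sum>a\<in>UNIV. \<Sum>c<L r q a. \<Sum>l<N. cnj (bigK r q a c l y) * bigK r q a c l y')
       = (\<Sum>a\<in>UNIV. \<Sum>c<L r q a. if a = undefined \<and> c = 0 then bigK r q a c y y' else 0)"
    proof (intro sum.cong refl)
      fix a c
      show "(\<Sum>l<N. cnj (bigK r q a c l y) * bigK r q a c l y') = (if a = undefined \<and> c = 0 then bigK r q a c y y' else 0)"
      proof (cases "a = undefined \<and> c = 0")
        case True
        have "(\<Sum>l<N. cnj (bigK r q a c l y) * bigK r q a c l y') = (\<Sum>l<N. if l = y then bigK r q a c l y' else 0)"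
          using True by (intro sum.cong refl) (simp add: bigK_inv[OF False])
        also have "\<dots> = bigK r q a c y y'" using y by (simp add: sum.delta')
        finally show ?thesis using True by simp
      next
        case F: False
        have "(\<Sum>l<N. cnj (bigK r q a c l y) * bigK r q a c l y') = 0"
          using F by (intro sum.neutral ballI) (auto simp: bigK_inv[OF False])
        then show ?thesis using F by auto
      qed
    qed
    also have "\<dots> = bigK r q undefined 0 y y'"
    proof -
      have "(\<Sum>c<L r q a. if a = undefined \<and> c = 0 then bigK r q a c y y' else 0) = (if a = undefined then bigK r q undefined 0 y y' else 0)" for a
      proof (cases "a = undefined")
        case True
        then show ?thesis using L_pos[of r q a] by (simp add: sum.delta)
      qed simp
      then show ?thesis by simp
    qed
    also have "\<dots> = (if y = y' then 1 else 0)"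
      using False by (cases "valid y'") (auto simp: bigK_def)
    finally show ?thesis .
  next
    case vy: True
    show ?thesis
    proof (cases "valid y'")
      case False
      have "(\<Sum>a\<in>UNIV. \<Sum>c<L r q a. \<Sum>l<N. cnj (bigK r q a c l y) * bigK r q a c l y') = 0"
        using vy False by (intro sum.neutral ballI) (auto simp: bigK_inv[OF False] bigK_valid[OF vy])
      then show ?thesis using vy False by auto
    next
      case vy': True
      show ?thesis
      proof (cases "y div D = y' div D")
        case False
        have "(\<Sum>a\<in>UNIV. \<Sum>c<L r q a. \<Sum>l<N. cnj (bigK r q a c l y) * bigK r q a c l y') = 0"
          using vy vy' False by (intro sum.neutral ballI) (auto simp: bigK_valid)
        then show ?thesis using False by auto
      next
        case True
        define m where "m = g (y div D)"
        have xm: "y mod D < dims S m" "y' mod D < dims S m"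
          using vy vy' True by (auto simp: valid_def m_def)
        have "(\<Sum>a\<in>UNIV. \<Sum>c<L r q a. \<Sum>l<N. cnj (bigK r q a c l y) * bigK r q a c l y')
          = (\<Sum>a\<in>UNIV. \<Sum>c<L r q a. \<Sum>z<dims S m. cnj (kr m r q a c z (y mod D)) * kr m r q a c z (y' mod D))"
        proof (rule sum.cong[OF refl], rule sum.cong[OF refl])
          fix a c
          have "(\<Sum>l<N. cnj (bigK r q a c l y) * bigK r q a c l y') = (\<Sum>z<dims S m. cnj (bigK r q a c (y div D * D + z) y) * bigK r q a c (y div D * D + z) y')"
            unfolding m_def by (rule blocksum[OF vy]) (auto simp: bigK_valid[OF vy])
          also have "\<dots> = (\<Sum>z<dims S m. cnj (kr m r q a c z (y mod D)) * kr m r q a c z (y' mod D))"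
          proof (intro sum.cong refl)
            fix z assume "z \<in> {..<dims S m}"
            then have z: "z < dims S m" by simp
            have vl: "valid (y div D * D + z)" using z vy enc_div[OF z] enc_mod[OF z] by (simp add: valid_def m_def)
            show "cnj (bigK r q a c (y div D * D + z) y) * bigK r q a c (y div D * D + z) y' = cnj (kr m r q a c z (y mod D)) * kr m r q a c z (y' mod D)"
              using vl True enc_div[OF z] enc_mod[OF z] by (simp add: bigK_valid[OF vy] bigK_valid[OF vy'] m_def)
          qed
          finally show "(\<Sum>l<N. cnj (bigK r q a c l y) * bigK r q a c l y') = (\<Sum>z<dims S m. cnj (kr m r q a c z (y mod D)) * kr m r q a c z (y' mod D))" .
        qed
        also have "\<dots> = (\<Sum>a\<in>UNIV. sum_list (map (\<lambda>K. \<Sum>z<dims S m. cnj (K z (y mod D)) * K z (y' mod D)) (ops S m r q a)))"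
        proof (intro sum.cong refl)
          fix a
          have "(\<Sum>c<L r q a. \<Sum>z<dims S m. cnj (kr m r q a c z (y mod D)) * kr m r q a c z (y' mod D))
            = (\<Sum>c<length (ops S m r q a). \<Sum>z<dims S m. cnj (kr m r q a c z (y mod D)) * kr m r q a c z (y' mod D))"
            using len_le_L[of m r q a] by (intro sum.mono_neutral_right) (auto simp: kr_def)
          then show "(\<Sum>c<L r q a. \<Sum>z<dims S m. cnj (kr m r q a c z (y mod D)) * kr m r q a c z (y' mod D))
            = sum_list (map (\<lambda>K. \<Sum>z<dims S m. cnj (K z (y mod D)) * K z (y' mod D)) (ops S m r q a))"
            by (simp add: sl_nth kr_def)
        qed
        also have "\<dots> = (if y mod D = y' mod D then 1 else 0)"
          using orig[OF xm[unfolded m_def]] unfolding m_def .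
        also have "\<dots> = (if y = y' then 1 else 0)"
          using True by (metis div_mult_mod_eq)
        finally show ?thesis .
      qed
    qed
  qed
  finally show ?thesis .
qed

lemma bij_P: "bij l \<Longrightarrow> l \<in> P"
  unfolding P_def using bij_imp_permutes[of l UNIV] by (simp add: bij_def)

lemma lift_perm:
  assumes l: "l \<in> P" and s: "bij \<sigma>"
  shows "lift l \<psi> (J \<circ> \<sigma>) = lift (l \<circ> inv \<sigma>) \<psi> J"
proof -
  have s1: "\<sigma> (inv \<sigma> x) = x" for x using s by (simp add: bij_is_surj surj_f_inv_f)
  have s2: "inv \<sigma> (\<sigma> x) = x" for x using s by (simp add: bij_is_inj)
  have sec: "inSec l (J \<circ> \<sigma>) \<longleftrightarrow> inSec (l \<circ> inv \<sigma>) J"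
    unfolding inSec_def by (metis comp_apply s1 s2)
  have inv: "inv (l \<circ> inv \<sigma>) = \<sigma> \<circ> inv l"
    using o_inv_distrib[OF P_bij[OF l] bij_imp_bij_inv[OF s]] inv_inv_eq[OF s] by simp
  show ?thesis unfolding lift_def sec inv by simp
qed

lemma Psi'_sym:
  assumes s: "bij \<sigma>"
  shows "Psi' (J \<circ> \<sigma>) = Psi' J"
proof -
  have "Psi' (J \<circ> \<sigma>) = (\<Sum>l\<in>P. lift (l \<circ> inv \<sigma>) (\<lambda>j. cst * state S j) J)"
    unfolding Psi'_def using lift_perm s by (intro sum.cong) auto
  also have "\<dots> = Psi' J"
    unfolding Psi'_def
  proof (rule sum.reindex_bij_witness[where j="\<lambda>l. l \<circ> inv \<sigma>" and i="\<lambda>l. l \<circ> \<sigma>"])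
    have s1: "\<sigma> \<circ> inv \<sigma> = id" using bij_is_surj[OF s] surj_iff by blast
    have s2: "inv \<sigma> \<circ> \<sigma> = id" using bij_is_inj[OF s] inj_iff by blast
    fix l :: "'p \<Rightarrow> 'p"
    show "l \<circ> inv \<sigma> \<circ> \<sigma> = l" using s2 by (simp add: o_assoc[symmetric])
    show "l \<circ> \<sigma> \<circ> inv \<sigma> = l" using s1 by (simp add: o_assoc[symmetric])
    show "l \<in> P \<Longrightarrow> l \<circ> inv \<sigma> \<in> P" using P_bij bij_P bij_comp bij_imp_bij_inv[OF s] by blast
    show "l \<in> P \<Longrightarrow> l \<circ> \<sigma> \<in> P" using P_bij bij_P bij_comp s by blast
  qed simp
  finally show ?thesis .
qed

lemma Psi'_zero: "J \<notin> idx (\<lambda>_. N) \<Longrightarrow> Psi' J = 0"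
  unfolding Psi'_def lift_def using inSec_idx by (intro sum.neutral) auto

lemma card_P: "card P = fact CARD('p)"
  unfolding P_def by (rule card_permutations) auto

lemma cst_sq: "(cmod cst)^2 = 1 / fact CARD('p)"
proof -
  have "cmod cst = 1 / sqrt (fact CARD('p))" unfolding cst_def norm_of_real by simp
  then show ?thesis by (simp add: power_divide)
qed

lemma norm2_Psi': "norm2 (dims S) (state S) = 1 \<Longrightarrow> norm2 (\<lambda>_. N) Psi' = 1"
proof -
  assume n: "norm2 (dims S) (state S) = 1"
  have "norm2 (\<lambda>_. N) Psi' = (\<Sum>l\<in>P. norm2 (dims S) (\<lambda>j. cst * state S j))"
    unfolding Psi'_def by (rule norm2_sum_lift)
  also have "\<dots> = fact CARD('p) * (1 / fact CARD('p))"
    by (simp add: norm2_scale n cst_sq card_P)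
  finally show ?thesis by simp
qed

lemma accept_S':
  assumes sym: "symmetric_verifier V"
  shows "accept_prob V S' = accept_prob V S"
proof -
  have "accept_prob V S' = run V S' (rounds V) [] (\<lambda>J. \<Sum>l\<in>P. lift l (\<lambda>j. cst * state S j) J)"
    by (simp add: accept_prob_def S'_def Psi'_def)
  also have "\<dots> = (\<Sum>l\<in>P. run V S (rounds V) (perm_transcript (inv l) []) (\<lambda>j. cst * state S j))"
    by (rule run_main[OF sym])
  also have "\<dots> = fact CARD('p) * (1 / fact CARD('p) * accept_prob V S)"
    by (simp add: perm_transcript_def run_scale cst_sq card_P accept_prob_def)
  finally show ?thesis by simp
qed

lemma valid_S':
  assumes v: "valid_strategy V S"
  shows "valid_strategy V S'"
  unfolding valid_strategy_def
proof (intro conjI allI impI)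
  show "0 < dims S' i" for i using N_pos by (simp add: S'_def)
  show "state S' j = 0" if "j \<notin> idx (dims S')" for j
    using that Psi'_zero by (simp add: S'_def)
  show "norm2 (dims S') (state S') = 1"
    using v norm2_Psi' by (simp add: S'_def valid_strategy_def)
  fix i r q j j' assume r: "r < rounds V" and j: "j < dims S' i" and j': "j' < dims S' i"
  show "(\<Sum>a\<in>UNIV. sum_list (map (\<lambda>K. \<Sum>l<dims S' i. cnj (K l j) * K l j') (ops S' i r q a)))
             = (if j = j' then 1 else 0)"
    unfolding S'_def using tp[of j r q j'] j j' v r
    by (simp add: S'_def valid_strategy_def)
qed

end

theorem lemma3:
  fixes V :: "('p::finite, 'q::finite, 'a::finite) verifier"
    and S :: "('p, 'q, 'a) strategy"
  assumes "valid_verifier V"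
    and "symmetric_verifier V"
    and "valid_strategy V S"
  shows "\<exists>S' :: ('p, 'q, 'a) strategy.
           valid_strategy V S' \<and>
           accept_prob V S' = accept_prob V S \<and>
           (\<forall>i i'. dims S' i = dims S' i' \<and> ops S' i = ops S' i') \<and>
           (\<forall>\<sigma> j. bij \<sigma> \<longrightarrow> state S' (j \<circ> \<sigma>) = state S' j)"
proof -
  obtain h :: "nat \<Rightarrow> 'p" where h: "bij_betw h {0..<card (UNIV :: 'p set)} UNIV"
    using ex_bij_betw_nat_finite[of "UNIV :: 'p set"] by auto
  have fb: "bij_betw (inv_into {0..<CARD('p)} h) UNIV {..<CARD('p)}"
    using bij_betw_inv_into[OF h] by (simp add: atLeast0LessThan)
  have dp: "\<And>i. 0 < dims S i" using assms(3) by (simp add: valid_strategy_def)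
  interpret symc V S "inv_into {0..<CARD('p)} h" using fb dp by unfold_locales
  have "valid_strategy V S'" by (rule valid_S'[OF assms(3)])
  moreover have "accept_prob V S' = accept_prob V S" by (rule accept_S'[OF assms(2)])
  moreover have "\<forall>i i'. dims S' i = dims S' i' \<and> ops S' i = ops S' i'" by (simp add: S'_def)
  moreover have "\<forall>\<sigma> j. bij \<sigma> \<longrightarrow> state S' (j \<circ> \<sigma>) = state S' j"
    using Psi'_sym by (simp add: S'_def)
  ultimately show ?thesis by blast
qed

end
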